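(* Let $D$ be a finite set and $P:D^2\to\{0,1\}$ a binary predicate. Assume there exist two-element subsets $B,C\subseteq D$ such that $P|_{B\times C}$ is a singleton. Then for every positive integer $n$ there is an instance $I$ of $\mathrm{CSP}(P)$ with $2n$ variables and $n^2$ constraints such that for every $0<\varepsilon<1$, every $\varepsilon$-sparsifier of $I$ has $n^2$ constraints.
   Context: A binary CSP instance is $I=(V,D,\Pi,w)$ where $V$ is a finite set of variables, $D$ a finite domain, $\Pi$ a set of constraints, each a pair $\langle (u,v),P\rangle$ with $u,v\in V$ distinct and $P:D^2\to\{0,1\}$, and $w:\Pi\to\mathbb{R}_{>0}$ positive weights. $\mathrm{CSP}(P)$ is the class of instances in which every constraint uses the predicate $P$. For an assignment $A:V\to D$, $\mathrm{Val}_I(A)=\sum_{\pi=\langle(u,v),P\rangle\in\Pi} w(\pi)P(A(u),A(v))$. For $0<\varepsilon<1$, an $\varepsilon$-sparsifier of $I$ is an instance $I_\varepsilon=(V,D,\Pi_\varepsilon,w_\varepsilon)$ with $\Pi_\varepsilon\subseteq\Pi$ and $w_\varepsilon:\Pi_\varepsilon\to\mathbb{R}_{>0}$ such that for every $A:V\to D$, $(1-\varepsilon)\mathrm{Val}_I(A)\le \mathrm{Val}_{I_\varepsilon}(A)\le(1+\varepsilon)\mathrm{Val}_I(A)$; its number of constraints is $|\Pi_\varepsilon|$. A predicate is a singleton if exactly one tuple is mapped to $1$. $P|_{B\times C}$ denotes the restriction of $P$ to $B\times C$. *)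

theory Defs
  imports Complex_Main
begin

text \<open>An instance of CSP(P) with variable set V: since every constraint uses the same
predicate P, a constraint <(u,v),P> is identified with its scope (u,v).\<close>

definition csp_instance :: "'v set \<Rightarrow> ('v \<times> 'v) set \<Rightarrow> ('v \<times> 'v \<Rightarrow> real) \<Rightarrow> bool" where
  "csp_instance V Pi w \<longleftrightarrow> finite V \<and> Pi \<subseteq> {(u, v). u \<in> V \<and> v \<in> V \<and> u \<noteq> v}
     \<and> (\<forall>\<pi>\<in>Pi. w \<pi> > 0)"

definition Val :: "('d \<Rightarrow> 'd \<Rightarrow> bool) \<Rightarrow> ('v \<times> 'v) set \<Rightarrow> ('v \<times> 'v \<Rightarrow> real) \<Rightarrow> ('v \<Rightarrow> 'd) \<Rightarrow> real" where
  "Val P Pi w A = (\<Sum>\<pi>\<in>Pi. w \<pi> * (if P (A (fst \<pi>)) (A (snd \<pi>)) then 1 else 0))"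

definition is_sparsifier ::
  "'d set \<Rightarrow> ('d \<Rightarrow> 'd \<Rightarrow> bool) \<Rightarrow> 'v set \<Rightarrow> ('v \<times> 'v) set \<Rightarrow> ('v \<times> 'v \<Rightarrow> real) \<Rightarrow> real
    \<Rightarrow> ('v \<times> 'v) set \<Rightarrow> ('v \<times> 'v \<Rightarrow> real) \<Rightarrow> bool" where
  "is_sparsifier D P V Pi w eps Pe we \<longleftrightarrow>
     Pe \<subseteq> Pi \<and> (\<forall>\<pi>\<in>Pe. we \<pi> > 0) \<and>
     (\<forall>A. (\<forall>v\<in>V. A v \<in> D) \<longrightarrow>
        (1 - eps) * Val P Pi w A \<le> Val P Pe we A \<and> Val P Pe we A \<le> (1 + eps) * Val P Pi w A)"

end

theory Submission
  imports Defs
begin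

theorem theorem3:
  fixes D :: "'d set" and P :: "'d \<Rightarrow> 'd \<Rightarrow> bool" and B C :: "'d set"
  assumes "finite D"
    and "B \<subseteq> D" and "C \<subseteq> D" and "card B = 2" and "card C = 2"
    and "card {(b, c). b \<in> B \<and> c \<in> C \<and> P b c} = 1"
    and "(n::nat) > 0"
  shows "\<exists>(V::nat set) Pi w. csp_instance V Pi w \<and> card V = 2 * n \<and> card Pi = n ^ 2 \<and>
           (\<forall>eps::real. 0 < eps \<and> eps < 1 \<longrightarrow>
              (\<forall>Pe we. is_sparsifier D P V Pi w eps Pe we \<longrightarrow> card Pe = n ^ 2))"
proof -
  obtain p where p: "{(b, c). b \<in> B \<and> c \<in> C \<and> P b c} = {p}"
    using assms(6) card_1_singletonE by blast
  obtain bs cs where pe: "p = (bs, cs)" by (cases p)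
  have bsB: "bs \<in> B" and csC: "cs \<in> C" and Pbc: "P bs cs" using p pe by auto
  have uniq: "\<And>b c. b \<in> B \<Longrightarrow> c \<in> C \<Longrightarrow> P b c \<Longrightarrow> b = bs \<and> c = cs"
    using p pe by blast
  obtain b' where b': "b' \<in> B" "b' \<noteq> bs"
    using assms(4) bsB by (metis card_2_iff insert_iff)
  obtain c' where c': "c' \<in> C" "c' \<noteq> cs"
    using assms(5) csC by (metis card_2_iff insert_iff)
  define V :: "nat set" where "V = {0..<2*n}"
  define Pi :: "(nat \<times> nat) set" where "Pi = {0..<n} \<times> {n..<2*n}"
  define w :: "nat \<times> nat \<Rightarrow> real" where "w = (\<lambda>_. 1)"
  have inst: "csp_instance V Pi w"
    unfolding csp_instance_def V_def Pi_def w_def by auto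
  have cV: "card V = 2 * n" unfolding V_def by simp
  have cPi: "card Pi = n ^ 2" unfolding Pi_def by (simp add: power2_eq_square)
  have fPi: "finite Pi" unfolding Pi_def by simp
  have main: "\<forall>eps::real. 0 < eps \<and> eps < 1 \<longrightarrow>
              (\<forall>Pe we. is_sparsifier D P V Pi w eps Pe we \<longrightarrow> card Pe = n ^ 2)"
  proof (intro allI impI)
    fix eps :: real and Pe we
    assume e: "0 < eps \<and> eps < 1" and sp: "is_sparsifier D P V Pi w eps Pe we"
    have sub: "Pe \<subseteq> Pi" using sp unfolding is_sparsifier_def by blast
    have "Pi \<subseteq> Pe"
    proof
      fix q assume qP: "q \<in> Pi"
      obtain i j where q: "q = (i, j)" by (cases q)
      have ij: "i < n" "n \<le> j" "j < 2*n" using qP q Pi_def by auto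
      define A where "A = (\<lambda>v::nat. if v = i then bs else if v = j then cs
                                      else if v < n then b' else c')"
      have AD: "\<forall>v\<in>V. A v \<in> D" using assms(2,3) bsB csC b' c' unfolding A_def by auto
      have key: "\<And>u v. (u, v) \<in> Pi \<Longrightarrow> P (A u) (A v) \<longleftrightarrow> (u, v) = (i, j)"
      proof -
        fix u v assume uv: "(u, v) \<in> Pi"
        hence uvr: "u < n" "n \<le> v" "v < 2*n" unfolding Pi_def by auto
        have Au: "A u = (if u = i then bs else b')" using uvr ij unfolding A_def by auto
        have Av: "A v = (if v = j then cs else c')" using uvr ij unfolding A_def by auto
        have AuB: "A u \<in> B" using Au bsB b' by auto
        have AvC: "A v \<in> C" using Av csC c' by auto
        show "P (A u) (A v) \<longleftrightarrow> (u, v) = (i, j)"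
        proof
          assume "P (A u) (A v)"
          from uniq[OF AuB AvC this] show "(u, v) = (i, j)" using Au Av b' c' by (auto split: if_splits)
        next
          assume "(u, v) = (i, j)" thus "P (A u) (A v)" using Au Av Pbc by auto
        qed
      qed
      have v1: "Val P Pi w A = 1"
      proof -
        have "Val P Pi w A = w (i,j) * (if P (A i) (A j) then 1 else 0) +
               (\<Sum>\<pi>\<in>Pi - {(i,j)}. w \<pi> * (if P (A (fst \<pi>)) (A (snd \<pi>)) then 1 else 0))"
          unfolding Val_def using fPi qP q by (simp add: sum.remove)
        also have "(\<Sum>\<pi>\<in>Pi - {(i,j)}. w \<pi> * (if P (A (fst \<pi>)) (A (snd \<pi>)) then 1 else 0)) = 0"
          by (rule sum.neutral) (auto simp: key)
        finally show ?thesis using key qP q unfolding w_def by simp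
      qed
      show "q \<in> Pe"
      proof (rule ccontr)
        assume nq: "q \<notin> Pe"
        have "Val P Pe we A = 0"
          unfolding Val_def
        proof (rule sum.neutral, intro ballI)
          fix \<pi> assume "\<pi> \<in> Pe"
          hence "\<pi> \<in> Pi" "\<pi> \<noteq> (i,j)" using sub nq q by auto
          thus "we \<pi> * (if P (A (fst \<pi>)) (A (snd \<pi>)) then 1 else 0) = 0"
            using key[of "fst \<pi>" "snd \<pi>"] by simp
        qed
        moreover have "(1 - eps) * Val P Pi w A \<le> Val P Pe we A"
          using sp AD unfolding is_sparsifier_def by blast
        ultimately show False using v1 e by simp
      qed
    qed
    hence "Pe = Pi" using sub by blast
    thus "card Pe = n ^ 2" using cPi by simp
  qed
  show ?thesis using inst cV cPi main by blast
qed

end
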